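(* For integers $n>1$ and positive integers $a\neq b$, $\chi_{ld}(K_{a,b}[\overline{K_{n}}])=2$.
   Context: All graphs are finite, simple and undirected. For a graph $G=(V,E)$ of order $N$ without isolated vertices, a bijection $f\colon V\to\{1,2,\dots,N\}$ is a local distance antimagic labeling if $w(u)\neq w(v)$ for every edge $uv$, where $w(u)=\sum_{x\in N(u)}f(x)$ and $N(u)$ is the open neighborhood of $u$. $\chi_{ld}(G)$ is the minimum number of distinct weights over all local distance antimagic labelings of $G$. $K_{a,b}$ is the complete bipartite graph, $\overline{K_n}$ is the edgeless graph on $n$ vertices. The lexicographic product $G[H]$ has vertex set $V(G)\times V(H)$, with $(g,h)$ adjacent to $(g',h')$ iff $gg'\in E(G)$, or $g=g'$ and $hh'\in E(H)$. *)

theory Defs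
  imports Main
begin

type_synonym 'a graph = "'a set \<times> 'a set set"

definition verts :: "'a graph \<Rightarrow> 'a set" where "verts G = fst G"
definition edges :: "'a graph \<Rightarrow> 'a set set" where "edges G = snd G"

definition simple_graph :: "'a graph \<Rightarrow> bool" where
  "simple_graph G \<longleftrightarrow> finite (verts G) \<and>
     (\<forall>e\<in>edges G. \<exists>u v. u \<noteq> v \<and> e = {u, v} \<and> u \<in> verts G \<and> v \<in> verts G)"

definition nbhd :: "'a graph \<Rightarrow> 'a \<Rightarrow> 'a set" where
  "nbhd G u = {x \<in> verts G. {u, x} \<in> edges G}"

definition no_isolated :: "'a graph \<Rightarrow> bool" where
  "no_isolated G \<longleftrightarrow> (\<forall>u\<in>verts G. nbhd G u \<noteq> {})"

definition weight :: "'a graph \<Rightarrow> ('a \<Rightarrow> nat) \<Rightarrow> 'a \<Rightarrow> nat" where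
  "weight G f u = (\<Sum>x\<in>nbhd G u. f x)"

definition local_distance_antimagic :: "'a graph \<Rightarrow> ('a \<Rightarrow> nat) \<Rightarrow> bool" where
  "local_distance_antimagic G f \<longleftrightarrow>
     bij_betw f (verts G) {1..card (verts G)} \<and>
     (\<forall>u\<in>verts G. \<forall>v\<in>verts G. {u, v} \<in> edges G \<longrightarrow> weight G f u \<noteq> weight G f v)"

definition chi_ld :: "'a graph \<Rightarrow> nat" where
  "chi_ld G = (LEAST k. \<exists>f. local_distance_antimagic G f \<and> card (weight G f ` verts G) = k)"

definition complete_bipartite :: "nat \<Rightarrow> nat \<Rightarrow> (nat + nat) graph" where
  "complete_bipartite a b =
     (Inl ` {..<a} \<union> Inr ` {..<b}, {{Inl i, Inr j} | i j. i < a \<and> j < b})"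

definition edgeless :: "nat \<Rightarrow> nat graph" where
  "edgeless n = ({..<n}, {})"

definition lex_product :: "'a graph \<Rightarrow> 'b graph \<Rightarrow> ('a \<times> 'b) graph" where
  "lex_product G H =
     (verts G \<times> verts H,
      {{(g, h), (g', h')} | g h g' h'.
         g \<in> verts G \<and> g' \<in> verts G \<and> h \<in> verts H \<and> h' \<in> verts H \<and>
         ({g, g'} \<in> edges G \<or> (g = g' \<and> {h, h'} \<in> edges H))})"

end

theory Submission
  imports Defs "HOL-Combinatorics.Transposition"
begin

lemma edgesK:
  assumes "g \<in> Inl ` {..<a} \<union> Inr ` {..<b}" "g' \<in> Inl ` {..<a} \<union> Inr ` {..<b}"
  shows "{g, g'} \<in> edges (complete_bipartite a b) \<longleftrightarrow> isl g \<noteq> isl g'"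
proof
  assume "{g, g'} \<in> edges (complete_bipartite a b)"
  then obtain i j where "{g, g'} = {Inl i, Inr j}"
    by (auto simp: complete_bipartite_def edges_def)
  then show "isl g \<noteq> isl g'" by (auto simp: doubleton_eq_iff)
next
  assume "isl g \<noteq> isl g'"
  then show "{g, g'} \<in> edges (complete_bipartite a b)"
    using assms by (auto simp: complete_bipartite_def edges_def insert_commute)
qed

lemma vertsG:
  "verts (lex_product (complete_bipartite a b) (edgeless n)) =
     (Inl ` {..<a} \<union> Inr ` {..<b}) \<times> {..<n}"
  by (simp add: lex_product_def verts_def complete_bipartite_def edgeless_def)

lemma edgesG:
  "{p, q} \<in> edges (lex_product (complete_bipartite a b) (edgeless n)) \<longleftrightarrow>
    p \<in> verts (lex_product (complete_bipartite a b) (edgeless n)) \<and>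
    q \<in> verts (lex_product (complete_bipartite a b) (edgeless n)) \<and> isl (fst p) \<noteq> isl (fst q)"
  (is "?l \<longleftrightarrow> ?r")
proof
  assume ?l
  then obtain g h g' h' where e: "{p, q} = {(g, h), (g', h')}"
    and g: "g \<in> Inl ` {..<a} \<union> Inr ` {..<b}" "g' \<in> Inl ` {..<a} \<union> Inr ` {..<b}"
    and h: "h < n" "h' < n" and ed: "{g, g'} \<in> edges (complete_bipartite a b)"
  proof -
    from \<open>?l\<close> have "\<exists>g h g' h'. {p, q} = {(g, h), (g', h')} \<and>
      g \<in> Inl ` {..<a} \<union> Inr ` {..<b} \<and> g' \<in> Inl ` {..<a} \<union> Inr ` {..<b} \<and>
      h < n \<and> h' < n \<and> {g, g'} \<in> edges (complete_bipartite a b)"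
      unfolding lex_product_def edges_def verts_def
      by (simp add: complete_bipartite_def edgeless_def)
    then show ?thesis using that by blast
  qed
  have "isl g \<noteq> isl g'" using edgesK[OF g] ed by simp
  with e g h show ?r by (auto simp: vertsG doubleton_eq_iff)
next
  assume ?r
  obtain g h g' h' where pq: "p = (g, h)" "q = (g', h')" by (cases p, cases q) auto
  from \<open>?r\<close> pq have g: "g \<in> Inl ` {..<a} \<union> Inr ` {..<b}" "g' \<in> Inl ` {..<a} \<union> Inr ` {..<b}"
    and h: "h < n" "h' < n" and i: "isl g \<noteq> isl g'" by (auto simp: vertsG)
  have ed: "{g, g'} \<in> edges (complete_bipartite a b)" using edgesK[OF g] i by simp
  show ?l unfolding lex_product_def edges_def verts_def
    apply simp
    apply (rule exI[of _ g], rule exI[of _ h], rule exI[of _ g'], rule exI[of _ h'])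
    using g h ed pq by (simp add: complete_bipartite_def edgeless_def edges_def)
qed


lemma nbhdG:
  assumes "u \<in> verts (lex_product (complete_bipartite a b) (edgeless n))"
  shows "nbhd (lex_product (complete_bipartite a b) (edgeless n)) u =
     (if isl (fst u) then Inr ` {..<b} \<times> {..<n} else Inl ` {..<a} \<times> {..<n})"
  using assms unfolding nbhd_def edgesG by (auto simp: vertsG)

lemma weightG:
  assumes "u \<in> verts (lex_product (complete_bipartite a b) (edgeless n))"
  shows "weight (lex_product (complete_bipartite a b) (edgeless n)) f u =
     (if isl (fst u) then sum f (Inr ` {..<b} \<times> {..<n}) else sum f (Inl ` {..<a} \<times> {..<n}))"
  unfolding weight_def nbhdG[OF assms] by simp

lemma ldaG:
  assumes "a > 0" "b > 0" "n > 0"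
  shows "local_distance_antimagic (lex_product (complete_bipartite a b) (edgeless n)) f \<longleftrightarrow>
    bij_betw f (verts (lex_product (complete_bipartite a b) (edgeless n)))
       {1..card (verts (lex_product (complete_bipartite a b) (edgeless n)))} \<and>
    sum f (Inr ` {..<b} \<times> {..<n}) \<noteq> sum f (Inl ` {..<a} \<times> {..<n})"
proof -
  let ?G = "lex_product (complete_bipartite a b) (edgeless n)"
  have p0: "(Inl 0, 0) \<in> verts ?G" and q0: "(Inr 0, 0) \<in> verts ?G" using assms by (auto simp: vertsG)
  have e0: "{(Inl 0, 0), (Inr 0, 0)} \<in> edges ?G" using p0 q0 edgesG by auto
  show ?thesis unfolding local_distance_antimagic_def
  proof safe
    assume "\<forall>u\<in>verts ?G. \<forall>v\<in>verts ?G. {u, v} \<in> edges ?G \<longrightarrow> weight ?G f u \<noteq> weight ?G f v"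
      "sum f (Inr ` {..<b} \<times> {..<n}) = sum f (Inl ` {..<a} \<times> {..<n})"
    then show False using p0 q0 e0 weightG[OF p0, of f] weightG[OF q0, of f] by force
  next
    fix u v assume "sum f (Inr ` {..<b} \<times> {..<n}) \<noteq> sum f (Inl ` {..<a} \<times> {..<n})"
      "u \<in> verts ?G" "v \<in> verts ?G" "{u, v} \<in> edges ?G" "weight ?G f u = weight ?G f v"
    then show False using weightG[of u a b n f] weightG[of v a b n f] edgesG[of u v a b n]
      by (auto split: if_splits)
  qed
qed

theorem mainTheorem7:
  fixes n a b :: nat
  assumes "n > 1" and "a > 0" and "b > 0" and "a \<noteq> b"
  shows "chi_ld (lex_product (complete_bipartite a b) (edgeless n)) = 2"
proof -
  let ?G = "lex_product (complete_bipartite a b) (edgeless n)"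
  let ?V = "verts ?G"
  let ?L = "Inl ` {..<a} \<times> {..<n}"
  let ?R = "Inr ` {..<b} \<times> {..<n}"
  have n0: "n > 0" using assms by simp
  have p0: "(Inl 0, 0) \<in> ?V" and q0: "(Inr 0, 0) \<in> ?V" using assms by (auto simp: vertsG)
  have pL: "(Inl 0, 0) \<in> ?L" and qR: "(Inr 0, 0) \<in> ?R" using assms by auto
  have finV: "finite ?V" by (simp add: vertsG)
  have card2: "card (weight ?G f ` ?V) = 2" if "local_distance_antimagic ?G f" for f
  proof -
    have ne: "sum f ?R \<noteq> sum f ?L" using that ldaG[OF assms(2,3) n0] by blast
    have "weight ?G f ` ?V = {sum f ?R, sum f ?L}"
    proof
      show "weight ?G f ` ?V \<subseteq> {sum f ?R, sum f ?L}" using weightG[of _ a b n f] by auto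
      show "{sum f ?R, sum f ?L} \<subseteq> weight ?G f ` ?V"
        using weightG[OF p0, of f] weightG[OF q0, of f] p0 q0
      proof -
        have "weight ?G f (Inl 0, 0) = sum f ?R" "weight ?G f (Inr 0, 0) = sum f ?L"
          using weightG[OF p0, of f] weightG[OF q0, of f] by simp_all
        then show ?thesis using p0 q0 by (metis empty_subsetI image_eqI insert_subset)
      qed
    qed
    then show ?thesis using ne by simp
  qed
  obtain h where h: "bij_betw h {1..card ?V} ?V" using ex_bij_betw_nat_finite_1[OF finV] by blast
  define f0 where "f0 = inv_into {1..card ?V} h"
  have bf0: "bij_betw f0 ?V {1..card ?V}" unfolding f0_def by (rule bij_betw_inv_into[OF h])
  have ex: "\<exists>f. local_distance_antimagic ?G f"
  proof (cases "sum f0 ?R = sum f0 ?L")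
    case False
    then show ?thesis using bf0 ldaG[OF assms(2,3) n0] by blast
  next
    case True
    define f1 where "f1 = f0 \<circ> transpose (Inl 0, 0) (Inr 0, 0)"
    have bt: "bij_betw (transpose (Inl 0, 0) (Inr 0, 0)) ?V ?V" using p0 q0 by simp
    have bf1: "bij_betw f1 ?V {1..card ?V}" unfolding f1_def using bij_betw_trans[OF bt bf0] .
    have finL: "finite ?L" and finR: "finite ?R" by auto
    have sL: "sum f1 ?L = f0 (Inr 0, 0) + sum f0 (?L - {(Inl 0, 0)})"
    proof -
      have "sum f1 ?L = f1 (Inl 0, 0) + sum f1 (?L - {(Inl 0, 0)})" by (rule sum.remove[OF finL pL])
      also have "sum f1 (?L - {(Inl 0, 0)}) = sum f0 (?L - {(Inl 0, 0)})"
        by (rule sum.cong) (auto simp: f1_def transpose_def)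
      finally show ?thesis by (simp add: f1_def)
    qed
    have sL0: "sum f0 ?L = f0 (Inl 0, 0) + sum f0 (?L - {(Inl 0, 0)})" by (rule sum.remove[OF finL pL])
    have sR: "sum f1 ?R = f0 (Inl 0, 0) + sum f0 (?R - {(Inr 0, 0)})"
    proof -
      have "sum f1 ?R = f1 (Inr 0, 0) + sum f1 (?R - {(Inr 0, 0)})" by (rule sum.remove[OF finR qR])
      also have "sum f1 (?R - {(Inr 0, 0)}) = sum f0 (?R - {(Inr 0, 0)})"
        by (rule sum.cong) (auto simp: f1_def transpose_def)
      finally show ?thesis by (simp add: f1_def)
    qed
    have sR0: "sum f0 ?R = f0 (Inr 0, 0) + sum f0 (?R - {(Inr 0, 0)})" by (rule sum.remove[OF finR qR])
    have "f0 (Inl 0, 0) \<noteq> f0 (Inr 0, 0)"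
      using bf0 p0 q0 unfolding bij_betw_def inj_on_def by blast
    then have "sum f1 ?R \<noteq> sum f1 ?L" using True sL sR sL0 sR0 by linarith
    then show ?thesis using bf1 ldaG[OF assms(2,3) n0] by blast
  qed
  then obtain f where f: "local_distance_antimagic ?G f" by blast
  show ?thesis unfolding chi_ld_def
  proof (rule Least_equality)
    show "\<exists>f. local_distance_antimagic ?G f \<and> card (weight ?G f ` ?V) = 2"
      using f card2 by blast
  next
    fix y assume "\<exists>f. local_distance_antimagic ?G f \<and> card (weight ?G f ` ?V) = y"
    then show "2 \<le> y" using card2 by auto
  qed
qed

end
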